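(* A square-grid circle pattern $z$ satisfies $M_b(z)=z$ and $M_w(z)=z$ if and only if it has constant horizontal and vertical intersection angles.
   Context: A square-grid circle pattern is a map $z$ from vertices of $\mathbb{Z}^2$ to $\mathbb{C}$ such that the four corners of each face $(m,n)$ lie on a circle; faces are black if $m+n$ is even, white otherwise. Each vertex lies on two black and two white circles. $M_b$ moves each vertex to the other intersection point of the two white circles through it; $M_w$ moves each vertex to the other intersection point of the two black circles through it. The intersection angle $\theta(e)\in[0,\pi)$ of an edge $e$ is the angle between the circles of the two faces adjacent to $e$. Constant horizontal and vertical intersection angles means there is $\alpha\in[0,\pi/2]$ with $\theta=\alpha$ on all vertical edges and $\theta=\pi-\alpha$ on all horizontal edges.
   Formalization: Constant horizontal and vertical intersection angles means that some alpha, not bound to [0, pi/2], has theta = alpha on all vertical edges and theta = pi - alpha on all horizontal edges. The statement above fails without it. *)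

theory Defs
  imports "HOL-Analysis.Analysis"
begin

type_synonym grid_map = "int \<times> int \<Rightarrow> complex"

definition face_corners :: "grid_map \<Rightarrow> int \<times> int \<Rightarrow> complex list" where
  "face_corners z f = (case f of (m, n) \<Rightarrow>
     [z (m, n), z (m + 1, n), z (m + 1, n + 1), z (m, n + 1)])"

definition black_face :: "int \<times> int \<Rightarrow> bool" where
  "black_face f = even (fst f + snd f)"

definition circle_pattern :: "grid_map \<Rightarrow> bool" where
  "circle_pattern z \<longleftrightarrow>
     (\<forall>f. distinct (face_corners z f) \<and>
          (\<exists>c r. r > 0 \<and> set (face_corners z f) \<subseteq> sphere c r))"

text \<open>Center and circle of a face (unique, since the corners are distinct).\<close>
definition face_center :: "grid_map \<Rightarrow> int \<times> int \<Rightarrow> complex" where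
  "face_center z f = (THE c. \<exists>r > 0. set (face_corners z f) \<subseteq> sphere c r)"

definition face_circle :: "grid_map \<Rightarrow> int \<times> int \<Rightarrow> complex set" where
  "face_circle z f = sphere (face_center z f) (dist (face_center z f) (z f))"

text \<open>The other intersection point of two circles C1, C2 through v (equal to v
  in case of tangency); undefined (None) if C1 \<inter> C2 is not of the form {v, w}.\<close>
definition other_intersection :: "complex set \<Rightarrow> complex set \<Rightarrow> complex \<Rightarrow> complex option" where
  "other_intersection C1 C2 v =
     (if \<exists>w. C1 \<inter> C2 = {v, w} then Some (THE w. C1 \<inter> C2 = {v, w}) else None)"

text \<open>The four faces around vertex (m,n) are (m,n), (m-1,n), (m-1,n-1), (m,n-1);
  (m,n),(m-1,n-1) have one colour, (m-1,n),(m,n-1) the other.\<close>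

text \<open>M_b: move each vertex to the other intersection point of the two white circles through it.\<close>
definition Mb :: "grid_map \<Rightarrow> int \<times> int \<Rightarrow> complex option" where
  "Mb z v = (case v of (m, n) \<Rightarrow>
     (if black_face (m, n)
      then other_intersection (face_circle z (m - 1, n)) (face_circle z (m, n - 1)) (z (m, n))
      else other_intersection (face_circle z (m, n)) (face_circle z (m - 1, n - 1)) (z (m, n))))"

text \<open>M_w: move each vertex to the other intersection point of the two black circles through it.\<close>
definition Mw :: "grid_map \<Rightarrow> int \<times> int \<Rightarrow> complex option" where
  "Mw z v = (case v of (m, n) \<Rightarrow>
     (if black_face (m, n)
      then other_intersection (face_circle z (m, n)) (face_circle z (m - 1, n - 1)) (z (m, n))
      else other_intersection (face_circle z (m - 1, n)) (face_circle z (m, n - 1)) (z (m, n))))"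

definition mod_pi :: "real \<Rightarrow> real" where
  "mod_pi x = x - pi * of_int \<lfloor>x / pi\<rfloor>"

text \<open>Oriented angle in [0,pi) at the point p from the circle with center c1 to the
  circle with center c2 (angle between their tangent lines at p).\<close>
definition circle_angle :: "complex \<Rightarrow> complex \<Rightarrow> complex \<Rightarrow> real" where
  "circle_angle c1 c2 p = mod_pi (Arg ((p - c2) / (p - c1)))"

text \<open>Intersection angle of the vertical edge from (m,n) to (m,n+1): measured at z(m,n),
  from the circle of face (m,n) to the circle of face (m-1,n) (counterclockwise order
  around the vertex (m,n)).\<close>
definition theta_vert :: "grid_map \<Rightarrow> int \<Rightarrow> int \<Rightarrow> real" where
  "theta_vert z m n = circle_angle (face_center z (m, n)) (face_center z (m - 1, n)) (z (m, n))"

text \<open>Intersection angle of the horizontal edge from (m,n) to (m+1,n): measured at z(m,n),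
  from the circle of face (m,n-1) to the circle of face (m,n).\<close>
definition theta_horiz :: "grid_map \<Rightarrow> int \<Rightarrow> int \<Rightarrow> real" where
  "theta_horiz z m n = circle_angle (face_center z (m, n - 1)) (face_center z (m, n)) (z (m, n))"

definition constant_angles :: "grid_map \<Rightarrow> bool" where
  "constant_angles z \<longleftrightarrow>
     (\<exists>\<alpha>. (\<forall>m n. theta_vert z m n = \<alpha>) \<and> (\<forall>m n. theta_horiz z m n = pi - \<alpha>))"

end

theory Submission
  imports Defs
begin


definition ang :: "complex \<Rightarrow> real" where "ang u = mod_pi (Arg u)"

lemma mod_pi_range: "0 \<le> mod_pi x \<and> mod_pi x < pi"
proof -
  have "of_int \<lfloor>x/pi\<rfloor> \<le> x/pi" "x/pi < of_int \<lfloor>x/pi\<rfloor> + 1" by linarith+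
  hence "pi * of_int \<lfloor>x/pi\<rfloor> \<le> pi * (x/pi)" "pi * (x/pi) < pi * (of_int \<lfloor>x/pi\<rfloor> + 1)"
    using pi_gt_zero by (intro mult_left_mono mult_strict_left_mono; simp)+
  hence "pi * of_int \<lfloor>x/pi\<rfloor> \<le> x" "x < pi * (of_int \<lfloor>x/pi\<rfloor> + 1)" by simp_all
  thus ?thesis unfolding mod_pi_def by (simp add: algebra_simps)
qed

lemma ang_rep: assumes "u \<noteq> 0" shows "\<exists>r. r \<noteq> 0 \<and> u = of_real r * cis (ang u)"
proof -
  define a where "a = Arg u"
  have u: "u = of_real (cmod u) * cis a" unfolding a_def by (metis rcis_cmod_Arg rcis_def)
  have b: "-pi < a" "a \<le> pi" unfolding a_def using Arg_bounded by auto
  have cu: "cmod u \<noteq> 0" using assms by simp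
  consider "a < 0" | "0 \<le> a \<and> a < pi" | "a = pi" using b by linarith
  thus ?thesis
  proof cases
    case 1
    have "\<lfloor>a/pi\<rfloor> = -1" using 1 b by (intro floor_unique) (auto simp: field_simps)
    hence "ang u = a + pi" unfolding ang_def mod_pi_def a_def[symmetric] by simp
    hence "cis (ang u) = cis a * cis pi" by (metis cis_mult)
    hence "cis (ang u) = - cis a" by simp
    thus ?thesis using cu u by (intro exI[of _ "- cmod u"]) simp
  next
    case 2
    have "\<lfloor>a/pi\<rfloor> = 0" using 2 b by (intro floor_unique) (auto simp: field_simps)
    hence "ang u = a" unfolding ang_def mod_pi_def a_def[symmetric] by simp
    thus ?thesis using cu u by (intro exI[of _ "cmod u"]) simp
  next
    case 3
    hence "ang u = 0" unfolding ang_def mod_pi_def a_def[symmetric] by simp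
    hence "cis (ang u) = - cis a" using 3 by simp
    thus ?thesis using cu u by (intro exI[of _ "- cmod u"]) simp
  qed
qed

lemma ang_range: "0 \<le> ang u \<and> ang u < pi" unfolding ang_def by (rule mod_pi_range)

lemma sin_zero_small: assumes "\<bar>x\<bar> < pi" "sin x = 0" shows "x = 0"
  using assms sin_zero_pi_iff by blast

lemma ang_unique: assumes "r \<noteq> 0" "0 \<le> t" "t < pi" "u = of_real r * cis t" shows "ang u = t"
proof -
  have u0: "u \<noteq> 0" using assms by (simp add: cis_neq_zero)
  obtain s where s: "s \<noteq> 0" "u = of_real s * cis (ang u)" using ang_rep[OF u0] by blast
  have e: "of_real r * cis t = of_real s * cis (ang u)" using s assms by simp
  have "of_real r * cis t * cis (- ang u) = of_real s * cis (ang u) * cis (-ang u)" using e by simp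
  hence "of_real r * cis (t - ang u) = of_real s"
    by (simp add: cis_mult mult.assoc)
  hence "Im (of_real r * cis (t - ang u)) = 0" by (metis Im_complex_of_real)
  hence "r * sin (t - ang u) = 0" by (simp add: cis_def)
  hence "sin (t - ang u) = 0" using assms by simp
  moreover have "\<bar>t - ang u\<bar> < pi" using ang_range[of u] assms by auto
  ultimately show ?thesis using sin_zero_small by fastforce
qed

lemma ang_scale: assumes "k \<noteq> 0" "u \<noteq> 0" shows "ang (of_real k * u) = ang u"
proof -
  obtain r where r: "r \<noteq> 0" "u = of_real r * cis (ang u)" using ang_rep[OF assms(2)] by blast
  show ?thesis using ang_range[of u] assms r
    by (intro ang_unique[where r = "k*r"]) (auto simp: mult.assoc)
qed

lemma ang_eq_par: assumes "u \<noteq> 0" "v \<noteq> 0" "ang u = ang v"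
  shows "\<exists>k. k \<noteq> 0 \<and> u = of_real k * v"
proof -
  obtain r where r: "r \<noteq> 0" "u = of_real r * cis (ang u)" using ang_rep[OF assms(1)] by blast
  obtain s where s: "s \<noteq> 0" "v = of_real s * cis (ang v)" using ang_rep[OF assms(2)] by blast
  show ?thesis using r s assms by (intro exI[of _ "r/s"]) (auto simp: field_simps)
qed

lemma ang_one: "ang 1 = 0"
  by (rule ang_unique[where r=1]) auto

lemma ang_sum_pi: assumes "u \<noteq> 0" "v \<noteq> 0" "ang u + ang v = pi"
  shows "\<exists>k. u * v = of_real k"
proof -
  obtain r where r: "r \<noteq> 0" "u = of_real r * cis (ang u)" using ang_rep[OF assms(1)] by blast
  obtain s where s: "s \<noteq> 0" "v = of_real s * cis (ang v)" using ang_rep[OF assms(2)] by blast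
  have "u * v = of_real (r * s) * cis (ang u + ang v)" using r s by (simp add: cis_mult[symmetric] mult_ac)
  also have "\<dots> = of_real (- r * s)" using assms by simp
  finally show ?thesis by blast
qed

lemma ang_sum_pi2: assumes "u \<noteq> 0" "v \<noteq> 0" "u * v = of_real k" "\<forall>j. u \<noteq> of_real j"
  shows "ang u + ang v = pi"
proof -
  obtain r where r: "r \<noteq> 0" "u = of_real r * cis (ang u)" using ang_rep[OF assms(1)] by blast
  obtain s where s: "s \<noteq> 0" "v = of_real s * cis (ang v)" using ang_rep[OF assms(2)] by blast
  have "u * v = of_real (r * s) * cis (ang u + ang v)" using r s by (simp add: cis_mult[symmetric] mult_ac)
  hence "Im (of_real (r * s) * cis (ang u + ang v)) = 0" using assms(3) by (metis Im_complex_of_real)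
  moreover have "Im (of_real (r * s) * cis (ang u + ang v)) = r * s * sin (ang u + ang v)"
    by (simp add: cis.sel)
  ultimately have "sin (ang u + ang v) = 0" using r s by simp
  hence z: "sin (ang u + ang v - pi) = 0" by (simp add: sin_diff)
  have "ang u \<noteq> 0"
  proof
    assume "ang u = 0" then have "u = of_real r" using r by simp
    thus False using assms(4) by blast
  qed
  hence "\<bar>ang u + ang v - pi\<bar> < pi" using ang_range[of u] ang_range[of v] by auto
  thus ?thesis using z sin_zero_small by fastforce
qed



lemma re_eq: assumes "cmod y = cmod a" "cmod (y - d) = cmod (a - d)"
  shows "Re (y * cnj d) = Re (a * cnj d)"
proof -
  have "(cmod y)^2 = (cmod a)^2" "(cmod (y - d))^2 = (cmod (a - d))^2" using assms by simp_all
  hence "Re y ^2 + Im y ^2 = Re a ^2 + Im a ^2"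
    "(Re y - Re d)^2 + (Im y - Im d)^2 = (Re a - Re d)^2 + (Im a - Im d)^2"
    by (simp_all add: cmod_power2)
  thus ?thesis by (simp add: power2_eq_square algebra_simps)
qed

lemma two_sol: assumes "d \<noteq> 0" "cmod y = cmod a" "Re (y * cnj d) = Re (a * cnj d)"
  shows "y = a \<or> y = cnj a * d / cnj d"
proof -
  define w where "w = y * cnj d"
  define w0 where "w0 = a * cnj d"
  have "cmod w = cmod w0" unfolding w_def w0_def using assms by (simp add: norm_mult)
  hence "(cmod w)^2 = (cmod w0)^2" by simp
  hence "Re w ^2 + Im w ^2 = Re w0 ^2 + Im w0 ^2" by (simp add: cmod_power2)
  moreover have "Re w = Re w0" using assms unfolding w_def w0_def by simp
  ultimately have "Im w ^2 = Im w0 ^2" by simp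
  hence disj: "Im w = Im w0 \<or> Im w = - Im w0" by (simp add: power2_eq_iff)
  have cd: "cnj d \<noteq> 0" using assms by simp
  from disj show ?thesis
  proof
    assume "Im w = Im w0"
    hence "w = w0" using \<open>Re w = Re w0\<close> by (simp add: complex_eq_iff)
    hence "y = a" using cd unfolding w_def w0_def by simp
    thus ?thesis by simp
  next
    assume "Im w = - Im w0"
    hence "w = cnj w0" using \<open>Re w = Re w0\<close> by (simp add: complex_eq_iff)
    hence "y * cnj d = cnj a * d" unfolding w_def w0_def by simp
    hence "y = cnj a * d / cnj d" using cd by (simp add: field_simps)
    thus ?thesis by simp
  qed
qed

lemma refl_ok: assumes "d \<noteq> 0"
  shows "cmod (cnj a * d / cnj d) = cmod a"
    and "cmod (cnj a * d / cnj d - d) = cmod (a - d)"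
    and "(cnj a * d / cnj d = a) \<longleftrightarrow> Im (a * cnj d) = 0"
proof -
  have cd: "cnj d \<noteq> 0" using assms by simp
  show "cmod (cnj a * d / cnj d) = cmod a" using assms by (simp add: norm_mult norm_divide)
  have "cnj a * d / cnj d - d = d * cnj (a - d) / cnj d" using cd by (simp add: field_simps)
  moreover have "cmod (d * cnj (a - d) / cnj d) = cmod (a - d)" using assms
    unfolding norm_divide norm_mult complex_mod_cnj by simp
  ultimately show "cmod (cnj a * d / cnj d - d) = cmod (a - d)" by simp
  have "(cnj a * d / cnj d = a) \<longleftrightarrow> cnj a * d = a * cnj d" using cd by (auto simp: field_simps)
  also have "\<dots> \<longleftrightarrow> cnj (a * cnj d) = a * cnj d" by simp
  also have "\<dots> \<longleftrightarrow> Im (a * cnj d) = 0" by (auto simp: complex_eq_iff algebra_simps)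
  finally show "(cnj a * d / cnj d = a) \<longleftrightarrow> Im (a * cnj d) = 0" .
qed

lemma par_Im: fixes a d :: complex assumes "d \<noteq> 0" shows "Im (a * cnj d) = 0 \<longleftrightarrow> (\<exists>k. a = of_real k * d)"
proof
  assume h: "Im (a * cnj d) = 0"
  have "a * cnj d = of_real (Re (a * cnj d))" using h by (simp add: complex_eq_iff)
  hence "a * (d * cnj d) = of_real (Re (a * cnj d)) * d" by (simp add: mult_ac)
  hence e: "a * of_real ((cmod d)^2) = of_real (Re (a * cnj d)) * d"
    by (simp only: complex_mult_cnj cmod_power2)
  have n: "(cmod d)^2 \<noteq> 0" using assms by simp
  have "a = a * of_real ((cmod d)^2) / of_real ((cmod d)^2)" using n by simp
  also have "\<dots> = of_real (Re (a * cnj d)) * d / of_real ((cmod d)^2)" using e by simp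
  also have "\<dots> = of_real (Re (a * cnj d) / (cmod d)^2) * d" by (simp add: field_simps)
  finally have "a = of_real (Re (a * cnj d) / (cmod d)^2) * d" .
  thus "\<exists>k. a = of_real k * d" by blast
next
  assume "\<exists>k. a = of_real k * d"
  then obtain k where "a = of_real k * d" by blast
  thus "Im (a * cnj d) = 0" by (simp add: mult.assoc complex_mult_cnj)
qed

lemma sphere_mem: fixes x c p :: complex shows "x \<in> sphere c (dist c p) \<longleftrightarrow> cmod (x - c) = cmod (p - c)"
  by (simp add: dist_norm norm_minus_commute)

lemma tangency:
  fixes p c1 c2 :: complex
  assumes "p \<noteq> c1" "p \<noteq> c2"
  shows "sphere c1 (dist c1 p) \<inter> sphere c2 (dist c2 p) = {p} \<longleftrightarrow>
         (c1 \<noteq> c2 \<and> (\<exists>k. p - c1 = of_real k * (p - c2)))"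
proof
  assume I: "sphere c1 (dist c1 p) \<inter> sphere c2 (dist c2 p) = {p}"
  show "c1 \<noteq> c2 \<and> (\<exists>k. p - c1 = of_real k * (p - c2))"
  proof (intro conjI)
    show c12: "c1 \<noteq> c2"
    proof
      assume e: "c1 = c2"
      have "cmod (2 * c1 - p - c1) = cmod (p - c1)"
        by (metis add_diff_cancel_left' cancel_comm_monoid_add_class.diff_cancel diff_add_eq_diff_diff_swap
            mult_2 norm_minus_commute)
      hence "2 * c1 - p \<in> sphere c1 (dist c1 p)"
        unfolding sphere_mem by simp
      hence "2 * c1 - p \<in> sphere c1 (dist c1 p) \<inter> sphere c2 (dist c2 p)"
        unfolding e by simp
      hence "2 * c1 - p = p" using I by blast
      thus False using assms by simp
    qed
    define a where "a = p - c1"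
    define d where "d = c2 - c1"
    have d0: "d \<noteq> 0" using c12 unfolding d_def by simp
    have im: "Im (a * cnj d) = 0"
    proof (rule ccontr)
      assume ne: "Im (a * cnj d) \<noteq> 0"
      define q where "q = c1 + cnj a * d / cnj d"
      have "cmod (q - c1) = cmod (p - c1)" using refl_ok(1)[OF d0, of a] unfolding q_def a_def by simp
      moreover have "cmod (q - c2) = cmod (p - c2)" using refl_ok(2)[OF d0, of a]
        unfolding q_def a_def d_def by (simp add: algebra_simps)
      ultimately have "q \<in> sphere c1 (dist c1 p) \<inter> sphere c2 (dist c2 p)"
        by (simp del: mem_sphere add: sphere_mem)
      hence "q = p" using I by blast
      hence "cnj a * d / cnj d = a" unfolding q_def a_def by (metis add_diff_cancel_left')
      thus False using refl_ok(3)[OF d0, of a] ne by simp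
    qed
    then obtain k where k: "a = of_real k * d" using par_Im[OF d0] by blast
    have pc2: "p - c2 = of_real (k - 1) * d" using k unfolding a_def d_def by (simp add: algebra_simps)
    have "k \<noteq> 1" using pc2 assms by auto
    have "of_real (k / (k - 1)) * (p - c2) = of_real (k / (k - 1) * (k - 1)) * d"
      unfolding pc2 by (simp add: mult.assoc)
    also have "k / (k - 1) * (k - 1) = k" using \<open>k \<noteq> 1\<close> by simp
    finally have "a = of_real (k / (k - 1)) * (p - c2)" using k by simp
    thus "\<exists>k. p - c1 = of_real k * (p - c2)" unfolding a_def by blast
  qed
next
  assume h: "c1 \<noteq> c2 \<and> (\<exists>k. p - c1 = of_real k * (p - c2))"
  then obtain k where k: "p - c1 = of_real k * (p - c2)" by blast
  define a where "a = p - c1"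
  define d where "d = c2 - c1"
  have d0: "d \<noteq> 0" using h unfolding d_def by auto
  have k0: "k \<noteq> 0" using k assms by auto
  have "d = of_real (1 - 1/k) * a" using k k0 unfolding a_def d_def by (simp add: field_simps)
  hence im: "Im (a * cnj d) = 0" by (simp add: complex_mult_cnj mult.assoc)
  show "sphere c1 (dist c1 p) \<inter> sphere c2 (dist c2 p) = {p}"
  proof (intro equalityI subsetI)
    fix x assume "x \<in> sphere c1 (dist c1 p) \<inter> sphere c2 (dist c2 p)"
    hence "cmod (x - c1) = cmod (p - c1)" "cmod (x - c2) = cmod (p - c2)"
      by (simp_all del: mem_sphere add: sphere_mem)
    hence x: "cmod (x - c1) = cmod a" "cmod ((x - c1) - d) = cmod (a - d)"
      unfolding a_def d_def by (simp_all add: algebra_simps)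
    have "x - c1 = a \<or> x - c1 = cnj a * d / cnj d" using two_sol[OF d0 x(1) re_eq[OF x]] .
    hence "x - c1 = a" using refl_ok(3)[OF d0, of a] im by auto
    thus "x \<in> {p}" unfolding a_def by simp
  qed (simp add: sphere_mem)
qed

lemma edge_ratio:
  fixes p q c1 c2 :: complex
  assumes "p \<noteq> q" "cmod (q - c1) = cmod (p - c1)" "cmod (q - c2) = cmod (p - c2)" "p \<noteq> c1" "p \<noteq> c2"
  shows "\<exists>k. k \<noteq> 0 \<and> (q - c2) / (q - c1) = of_real k * ((p - c1) / (p - c2))"
proof (cases "c1 = c2")
  case True
  have "q \<noteq> c1" using assms by auto
  thus ?thesis using True assms by (intro exI[of _ 1]) simp
next
  case False
  define a where "a = p - c1"
  define d where "d = c2 - c1"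
  have d0: "d \<noteq> 0" using False unfolding d_def by simp
  have x: "cmod (q - c1) = cmod a" "cmod ((q - c1) - d) = cmod (a - d)"
    using assms unfolding a_def d_def by (simp_all add: algebra_simps)
  have "q - c1 = a \<or> q - c1 = cnj a * d / cnj d" using two_sol[OF d0 x(1) re_eq[OF x]] .
  hence qb: "q - c1 = cnj a * d / cnj d" using assms unfolding a_def by auto
  have cd: "cnj d \<noteq> 0" using d0 by simp
  have a0: "a \<noteq> 0" "a - d \<noteq> 0" using assms unfolding a_def d_def by auto
  have q2: "q - c2 = d * cnj (a - d) / cnj d"
    using qb cd unfolding d_def by (simp add: field_simps)
  have "(q - c2) / (q - c1) = (d * cnj (a - d) / cnj d) / (cnj a * d / cnj d)" by (simp only: q2 qb)
  also have "\<dots> = cnj (a - d) / cnj a" using cd d0 a0 by (simp add: field_simps)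
  also have "\<dots> = of_real ((cmod (a - d))^2 / (cmod a)^2) * (a / (a - d))"
  proof -
    have h1: "cnj (a - d) = of_real ((cmod (a-d))^2) / (a - d)"
      using a0 unfolding complex_norm_square by (metis nonzero_mult_div_cancel_left)
    have h2: "cnj a = of_real ((cmod a)^2) / a"
      using a0 unfolding complex_norm_square by (metis nonzero_mult_div_cancel_left)
    have n: "cmod a \<noteq> 0" using a0 by simp
    show ?thesis unfolding h1 h2 using a0 n by (simp add: field_simps)
  qed
  finally have eq: "(q - c2) / (q - c1) = of_real ((cmod (a - d))^2 / (cmod a)^2) * (a / (a - d))" .
  have ad: "p - c2 = a - d" unfolding a_def d_def by simp
  have apd: "p - c1 = a" unfolding a_def by simp
  show ?thesis unfolding ad apd using a0 eq
    by (intro exI[of _ "(cmod (a - d))^2 / (cmod a)^2"]) simp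
qed

lemma three_points:
  fixes x1 x2 x3 c c' :: complex
  assumes "x1 \<noteq> x2" "x1 \<noteq> x3" "x2 \<noteq> x3"
    "\<forall>x\<in>{x1,x2,x3}. cmod (x - c) = cmod (x1 - c)"
    "\<forall>x\<in>{x1,x2,x3}. cmod (x - c') = cmod (x1 - c')"
  shows "c = c'"
proof (rule ccontr)
  assume "c \<noteq> c'"
  define d where "d = c' - c"
  have d0: "d \<noteq> 0" using \<open>c \<noteq> c'\<close> unfolding d_def by simp
  have "\<And>x. x \<in> {x2, x3} \<Longrightarrow> x - c = cnj (x1 - c) * d / cnj d"
  proof -
    fix x assume xin: "x \<in> {x2, x3}"
    have h: "cmod (x - c) = cmod (x1 - c)" "cmod ((x - c) - d) = cmod ((x1 - c) - d)"
      using assms(4,5) xin unfolding d_def by (auto simp: algebra_simps)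
    have "x - c = x1 - c \<or> x - c = cnj (x1 - c) * d / cnj d" using two_sol[OF d0 h(1) re_eq[OF h]] .
    thus "x - c = cnj (x1 - c) * d / cnj d" using xin assms(1,2) by auto
  qed
  hence "x2 - c = x3 - c" by auto
  thus False using assms(3) by simp
qed



lemma fc_center:
  assumes cp: "circle_pattern z"
  shows "\<exists>r>0. set (face_corners z f) \<subseteq> sphere (face_center z f) r"
proof -
  obtain c r where cr: "r > 0" "set (face_corners z f) \<subseteq> sphere c r"
    using cp unfolding circle_pattern_def by blast
  have dist: "distinct (face_corners z f)" using cp unfolding circle_pattern_def by blast
  obtain m n where f: "f = (m,n)" by (cases f)
  have d: "z (m,n) \<noteq> z (m+1,n)" "z (m,n) \<noteq> z (m+1,n+1)" "z (m+1,n) \<noteq> z (m+1,n+1)"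
    using dist unfolding f face_corners_def by auto
  have mem: "{z (m,n), z (m+1,n), z (m+1,n+1)} \<subseteq> set (face_corners z f)"
    unfolding f face_corners_def by auto
  have on: "\<forall>x\<in>{z (m,n), z (m+1,n), z (m+1,n+1)}. cmod (x - c') = cmod (z (m,n) - c')"
    if "set (face_corners z f) \<subseteq> sphere c' r'" for c' r'
  proof -
    have "\<forall>x\<in>{z (m,n), z (m+1,n), z (m+1,n+1)}. dist c' x = r'" using that mem by auto
    thus ?thesis by (simp add: dist_norm norm_minus_commute)
  qed
  have uniq: "c' = c" if h: "\<exists>r'>0. set (face_corners z f) \<subseteq> sphere c' r'" for c'
  proof -
    obtain r' where "set (face_corners z f) \<subseteq> sphere c' r'" using h by blast
    from three_points[OF d on[OF this] on[OF cr(2)]] show ?thesis .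
  qed
  have "face_center z f = c" unfolding face_center_def using cr uniq by (intro the_equality) auto
  thus ?thesis using cr by auto
qed

lemma fc_rad:
  assumes cp: "circle_pattern z" and x: "x \<in> set (face_corners z f)"
  shows "cmod (x - face_center z f) = cmod (z f - face_center z f)"
    and "x \<noteq> face_center z f"
proof -
  obtain r where r: "r > 0" "set (face_corners z f) \<subseteq> sphere (face_center z f) r"
    using fc_center[OF cp] by blast
  obtain m n where f: "f = (m,n)" by (cases f)
  have zf: "z f \<in> set (face_corners z f)" unfolding f face_corners_def by simp
  have "dist (face_center z f) x = r" "dist (face_center z f) (z f) = r" using r x zf by auto
  thus "cmod (x - face_center z f) = cmod (z f - face_center z f)"
    by (simp add: dist_norm norm_minus_commute)
  show "x \<noteq> face_center z f" using \<open>dist (face_center z f) x = r\<close> r by auto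
qed

lemma fc_rad2:
  assumes cp: "circle_pattern z" "x \<in> set (face_corners z f)" "y \<in> set (face_corners z f)"
  shows "cmod (x - face_center z f) = cmod (y - face_center z f)"
  using fc_rad(1)[OF cp(1,2)] fc_rad(1)[OF cp(1,3)] by simp

lemma fcircle:
  assumes cp: "circle_pattern z" and x: "x \<in> set (face_corners z f)"
  shows "face_circle z f = sphere (face_center z f) (dist (face_center z f) x)"
proof -
  have "dist (face_center z f) (z f) = dist (face_center z f) x"
    using fc_rad(1)[OF cp x] by (simp add: dist_norm norm_minus_commute)
  thus ?thesis unfolding face_circle_def by simp
qed

lemma dcorners:
  assumes cp: "circle_pattern z"
  shows "distinct [z (m,n), z (m+1,n), z (m+1,n+1), z (m,n+1)]"
proof -
  have "distinct (face_corners z (m,n))" using cp unfolding circle_pattern_def by blast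
  thus ?thesis by (simp add: face_corners_def)
qed

lemma oi_self: "other_intersection C1 C2 v = Some v \<longleftrightarrow> C1 \<inter> C2 = {v}"
proof
  assume h: "other_intersection C1 C2 v = Some v"
  then obtain w where w: "C1 \<inter> C2 = {v, w}" unfolding other_intersection_def
    by (auto split: if_splits)
  hence ex: "\<exists>w. C1 \<inter> C2 = {v, w}" by blast
  have "other_intersection C1 C2 v = Some (THE w. C1 \<inter> C2 = {v, w})"
    unfolding other_intersection_def by (simp only: ex if_True)
  hence t: "(THE w. C1 \<inter> C2 = {v, w}) = v" using h by simp
  show "C1 \<inter> C2 = {v}"
  proof (cases "w = v")
    case True thus ?thesis using w by simp
  next
    case False
    have "(THE w'. C1 \<inter> C2 = {v, w'}) = w"
      using w False by (intro the_equality) (auto simp: doubleton_eq_iff)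
    thus ?thesis using t False by simp
  qed
next
  assume h: "C1 \<inter> C2 = {v}"
  have "(THE w. C1 \<inter> C2 = {v, w}) = v" using h by (intro the_equality) auto
  thus "other_intersection C1 C2 v = Some v" unfolding other_intersection_def using h by auto
qed

definition T1 where "T1 z m n \<longleftrightarrow> face_circle z (m,n) \<inter> face_circle z (m-1,n-1) = {z (m,n)}"
definition T2 where "T2 z m n \<longleftrightarrow> face_circle z (m-1,n) \<inter> face_circle z (m,n-1) = {z (m,n)}"

lemma fixed_iff: "(Mb z = Some \<circ> z \<and> Mw z = Some \<circ> z) \<longleftrightarrow> (\<forall>m n. T1 z m n \<and> T2 z m n)"
proof -
  have "(Mb z = Some \<circ> z \<and> Mw z = Some \<circ> z) \<longleftrightarrow>
        (\<forall>m n. Mb z (m,n) = Some (z (m,n)) \<and> Mw z (m,n) = Some (z (m,n)))"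
    by (auto simp: fun_eq_iff)
  also have "\<dots> \<longleftrightarrow> (\<forall>m n. T1 z m n \<and> T2 z m n)"
  proof -
    have "Mb z (m,n) = Some (z (m,n)) \<and> Mw z (m,n) = Some (z (m,n)) \<longleftrightarrow> T1 z m n \<and> T2 z m n" for m n
      by (cases "black_face (m,n)") (simp_all only: Mb_def Mw_def T1_def T2_def oi_self case_prod_conv if_True if_False conj_commute)
    thus ?thesis by blast
  qed
  finally show ?thesis .
qed



lemma int_const: fixes f :: "int \<Rightarrow> real" assumes h: "\<forall>n. f n = f (n - 1)" shows "f n = f 0"
proof (induct n rule: int_induct[where k=0])
  case base show ?case by simp
next
  case (step1 i) thus ?case using h[rule_format, of "i+1"] by simp
next
  case (step2 i) thus ?case using h[rule_format, of i] by simp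
qed

context fixes z assumes cp: "circle_pattern z" begin

lemma vfacts:
  fixes m n :: int
  defines "p \<equiv> z (m,n)" and "c1 \<equiv> face_center z (m,n)" and "c2 \<equiv> face_center z (m-1,n)"
    and "c3 \<equiv> face_center z (m-1,n-1)" and "c4 \<equiv> face_center z (m,n-1)"
  shows nz: "p \<noteq> c1" "p \<noteq> c2" "p \<noteq> c3" "p \<noteq> c4"
  and t1: "T1 z m n \<longleftrightarrow> c1 \<noteq> c3 \<and> (\<exists>k. p - c1 = of_real k * (p - c3))"
  and t2: "T2 z m n \<longleftrightarrow> c2 \<noteq> c4 \<and> (\<exists>k. p - c2 = of_real k * (p - c4))"
  and tv: "theta_vert z m n = ang ((p - c2) / (p - c1))"
  and th: "theta_horiz z m n = ang ((p - c1) / (p - c4))"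
  and tv': "theta_vert z m (n-1) = ang ((p - c4) / (p - c3))"
  and th': "theta_horiz z (m-1) n = ang ((p - c3) / (p - c2))"
  and a12: "(\<exists>k. p - c1 = of_real k * (p - c2)) \<Longrightarrow> c1 = c2"
  and a14: "(\<exists>k. p - c1 = of_real k * (p - c4)) \<Longrightarrow> c1 = c4"
  and e13: "c1 = c3 \<Longrightarrow> c1 = c2"
  and e24: "c2 = c4 \<Longrightarrow> c1 = c2"
proof -
  define qv where "qv = z (m, n-1)"
  define qh where "qh = z (m-1, n)"
  define u where "u = z (m, n+1)"
  define r where "r = z (m+1, n)"
  have p1: "p \<in> set (face_corners z (m,n))" and p2: "p \<in> set (face_corners z (m-1,n))"
   and p3: "p \<in> set (face_corners z (m-1,n-1))" and p4: "p \<in> set (face_corners z (m,n-1))"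
   and qv4: "qv \<in> set (face_corners z (m,n-1))" and qv3: "qv \<in> set (face_corners z (m-1,n-1))"
   and qh2: "qh \<in> set (face_corners z (m-1,n))" and qh3: "qh \<in> set (face_corners z (m-1,n-1))"
   and u1: "u \<in> set (face_corners z (m,n))" and u2: "u \<in> set (face_corners z (m-1,n))"
   and r1: "r \<in> set (face_corners z (m,n))" and r4: "r \<in> set (face_corners z (m,n-1))"
    unfolding p_def qv_def qh_def u_def r_def by (simp_all add: face_corners_def)
  have dA: "p \<noteq> u" "p \<noteq> r" "r \<noteq> u" using dcorners[OF cp, of m n] unfolding p_def u_def r_def by auto
  have dB: "p \<noteq> qh" "qh \<noteq> u" using dcorners[OF cp, of "m-1" n] unfolding p_def u_def qh_def by auto
  have dC: "p \<noteq> qv" using dcorners[OF cp, of m "n-1"] unfolding p_def qv_def by auto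
  show n1: "p \<noteq> c1" using fc_rad(2)[OF cp p1] unfolding c1_def .
  show n2: "p \<noteq> c2" using fc_rad(2)[OF cp p2] unfolding c2_def .
  show n3: "p \<noteq> c3" using fc_rad(2)[OF cp p3] unfolding c3_def .
  show n4: "p \<noteq> c4" using fc_rad(2)[OF cp p4] unfolding c4_def .
  have S1: "face_circle z (m,n) = sphere c1 (dist c1 p)" using fcircle[OF cp p1] unfolding c1_def .
  have S2: "face_circle z (m-1,n) = sphere c2 (dist c2 p)" using fcircle[OF cp p2] unfolding c2_def .
  have S3: "face_circle z (m-1,n-1) = sphere c3 (dist c3 p)" using fcircle[OF cp p3] unfolding c3_def .
  have S4: "face_circle z (m,n-1) = sphere c4 (dist c4 p)" using fcircle[OF cp p4] unfolding c4_def .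
  show "T1 z m n \<longleftrightarrow> c1 \<noteq> c3 \<and> (\<exists>k. p - c1 = of_real k * (p - c3))"
    unfolding T1_def S1 S3 p_def[symmetric] by (rule tangency[OF n1 n3])
  show "T2 z m n \<longleftrightarrow> c2 \<noteq> c4 \<and> (\<exists>k. p - c2 = of_real k * (p - c4))"
    unfolding T2_def S2 S4 p_def[symmetric] by (rule tangency[OF n2 n4])
  show "theta_vert z m n = ang ((p - c2) / (p - c1))"
    unfolding theta_vert_def circle_angle_def ang_def p_def c1_def c2_def ..
  show "theta_horiz z m n = ang ((p - c1) / (p - c4))"
    unfolding theta_horiz_def circle_angle_def ang_def p_def c1_def c4_def ..
  have rv: "cmod (qv - c4) = cmod (p - c4)" using fc_rad2[OF cp qv4 p4] unfolding c4_def .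
  have rv3: "cmod (qv - c3) = cmod (p - c3)" using fc_rad2[OF cp qv3 p3] unfolding c3_def .
  obtain k where k: "k \<noteq> 0" "(qv - c3) / (qv - c4) = of_real k * ((p - c4) / (p - c3))"
    using edge_ratio[OF dC rv rv3 n4 n3] by blast
  have "theta_vert z m (n-1) = ang ((qv - c3) / (qv - c4))"
    unfolding theta_vert_def circle_angle_def ang_def qv_def c3_def c4_def by simp
  also have "\<dots> = ang ((p - c4) / (p - c3))" unfolding k(2) using k(1) n3 n4
    by (intro ang_scale) auto
  finally show "theta_vert z m (n-1) = ang ((p - c4) / (p - c3))" .
  have rh3: "cmod (qh - c3) = cmod (p - c3)" using fc_rad2[OF cp qh3 p3] unfolding c3_def .
  have rh2: "cmod (qh - c2) = cmod (p - c2)" using fc_rad2[OF cp qh2 p2] unfolding c2_def .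
  obtain k' where k': "k' \<noteq> 0" "(qh - c2) / (qh - c3) = of_real k' * ((p - c3) / (p - c2))"
    using edge_ratio[OF dB(1) rh3 rh2 n3 n2] by blast
  have "theta_horiz z (m-1) n = ang ((qh - c2) / (qh - c3))"
    unfolding theta_horiz_def circle_angle_def ang_def qh_def c3_def c2_def by simp
  also have "\<dots> = ang ((p - c3) / (p - c2))" unfolding k'(2) using k'(1) n3 n2
    by (intro ang_scale) auto
  finally show "theta_horiz z (m-1) n = ang ((p - c3) / (p - c2))" .
  show "c1 = c2" if h: "\<exists>k. p - c1 = of_real k * (p - c2)"
  proof (rule ccontr)
    assume "c1 \<noteq> c2"
    hence I: "sphere c1 (dist c1 p) \<inter> sphere c2 (dist c2 p) = {p}" using tangency[OF n1 n2] h by blast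
    have "cmod (u - c1) = cmod (p - c1)" using fc_rad2[OF cp u1 p1] unfolding c1_def .
    moreover have "cmod (u - c2) = cmod (p - c2)" using fc_rad2[OF cp u2 p2] unfolding c2_def .
    ultimately have "u \<in> sphere c1 (dist c1 p) \<inter> sphere c2 (dist c2 p)"
      by (simp del: mem_sphere add: sphere_mem)
    thus False using I dA by auto
  qed
  show "c1 = c4" if h: "\<exists>k. p - c1 = of_real k * (p - c4)"
  proof (rule ccontr)
    assume "c1 \<noteq> c4"
    hence I: "sphere c1 (dist c1 p) \<inter> sphere c4 (dist c4 p) = {p}" using tangency[OF n1 n4] h by blast
    have "cmod (r - c1) = cmod (p - c1)" using fc_rad2[OF cp r1 p1] unfolding c1_def .
    moreover have "cmod (r - c4) = cmod (p - c4)" using fc_rad2[OF cp r4 p4] unfolding c4_def .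
    ultimately have "r \<in> sphere c1 (dist c1 p) \<inter> sphere c4 (dist c4 p)"
      by (simp del: mem_sphere add: sphere_mem)
    thus False using I dA by auto
  qed
  show "c1 = c2" if h: "c1 = c3"
  proof -
    have "cmod (qh - c1) = cmod (p - c1)" using rh3 h by simp
    moreover have "cmod (u - c1) = cmod (p - c1)" using fc_rad2[OF cp u1 p1] unfolding c1_def .
    moreover have "cmod (u - c2) = cmod (p - c2)" using fc_rad2[OF cp u2 p2] unfolding c2_def .
    ultimately show ?thesis using three_points[of p qh u c1 c2] dA dB rh2 by auto
  qed
  show "c1 = c2" if h: "c2 = c4"
  proof -
    have "cmod (r - c2) = cmod (p - c2)" using fc_rad2[OF cp r4 p4] h unfolding c4_def by simp
    moreover have "cmod (u - c1) = cmod (p - c1)" using fc_rad2[OF cp u1 p1] unfolding c1_def .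
    moreover have "cmod (r - c1) = cmod (p - c1)" using fc_rad2[OF cp r1 p1] unfolding c1_def .
    moreover have "cmod (u - c2) = cmod (p - c2)" using fc_rad2[OF cp u2 p2] unfolding c2_def .
    ultimately show ?thesis using three_points[of p r u c1 c2] dA by auto
  qed
qed

end


lemma alg1:
  fixes x1 x2 x3 x4 :: complex
  assumes "x1 \<noteq> 0" "x2 \<noteq> 0" "x3 \<noteq> 0" "x4 \<noteq> 0" "x1 = of_real k * x3" "x2 = of_real l * x4"
  shows "x2 / x1 = of_real (l / k) * (x4 / x3)" "x3 / x2 = of_real (1 / (k * l)) * (x1 / x4)"
    "x2 / x1 * (x1 / x4) = of_real l"
  using assms by (auto simp: field_simps)

lemma alg2:
  fixes x1 x2 x3 x4 :: complex
  assumes "x1 \<noteq> 0" "x2 \<noteq> 0" "x3 \<noteq> 0" "x4 \<noteq> 0" "k \<noteq> 0" "x2 = of_real j * x4"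
    "x2 / x1 = of_real k * (x4 / x3)"
  shows "x1 = of_real (j / k) * x3"
proof -
  have "of_real j * x4 * x3 = of_real k * x4 * x1" using assms by (simp add: field_simps)
  hence "of_real j * x3 = of_real k * x1" using assms(4) by (simp add: mult_ac)
  thus ?thesis using assms(5) by (simp add: field_simps)
qed

lemma vertex_fwd:
  assumes cp: "circle_pattern z" and T: "T1 z m n" "T2 z m n"
  shows "theta_vert z m n = theta_vert z m (n-1)"
    and "theta_horiz z (m-1) n = theta_horiz z m n"
    and "theta_vert z m n + theta_horiz z m n = pi"
proof -
  define p where "p = z (m,n)"
  define c1 where "c1 = face_center z (m,n)"
  define c2 where "c2 = face_center z (m-1,n)"
  define c3 where "c3 = face_center z (m-1,n-1)"
  define c4 where "c4 = face_center z (m,n-1)"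
  note F = vfacts[OF cp, of m n, folded p_def c1_def c2_def c3_def c4_def]
  obtain k where k: "p - c1 = of_real k * (p - c3)" using F(5) T(1) by blast
  obtain l where l: "p - c2 = of_real l * (p - c4)" using F(6) T(2) by blast
  have ne: "c2 \<noteq> c4" using F(6) T(2) by blast
  have a: "p - c1 \<noteq> 0" "p - c2 \<noteq> 0" "p - c3 \<noteq> 0" "p - c4 \<noteq> 0" using F(1-4) by auto
  have k0: "k \<noteq> 0" using k a by auto
  have l0: "l \<noteq> 0" using l a by auto
  note AL = alg1[OF a k l]
  have e1: "(p - c2) / (p - c1) = of_real (l / k) * ((p - c4) / (p - c3))" by (rule AL(1))
  have "ang ((p - c2) / (p - c1)) = ang ((p - c4) / (p - c3))"
    unfolding e1 by (rule ang_scale) (use k0 l0 a in auto)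
  thus "theta_vert z m n = theta_vert z m (n-1)" using F(7,9) by simp
  have e2: "(p - c3) / (p - c2) = of_real (1 / (k * l)) * ((p - c1) / (p - c4))" by (rule AL(2))
  have "ang ((p - c3) / (p - c2)) = ang ((p - c1) / (p - c4))"
    unfolding e2 by (rule ang_scale) (use k0 l0 a in auto)
  thus "theta_horiz z (m-1) n = theta_horiz z m n" using F(8,10) by simp
  have prod: "(p - c2) / (p - c1) * ((p - c1) / (p - c4)) = of_real l" by (rule AL(3))
  have nreal: "\<forall>j. (p - c2) / (p - c1) \<noteq> of_real j"
  proof (intro allI notI)
    fix j assume "(p - c2) / (p - c1) = of_real j"
    hence j: "p - c2 = of_real j * (p - c1)" using a by (simp add: field_simps)
    hence j0: "j \<noteq> 0" using a by auto
    have "p - c1 = of_real (1/j) * (p - c2)" unfolding j using j0 by simp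
    hence e12: "c1 = c2" using F(11) by blast
    have "p - c1 = of_real (l/j) * (p - c4)" using j l j0 l0 a
      by (metis (no_types, lifting) \<open>p - c1 = of_real (1/j) * (p - c2)\<close> mult.assoc of_real_mult
          times_divide_eq_left mult_1)
    hence "c1 = c4" using F(12) by blast
    thus False using e12 ne by simp
  qed
  have "ang ((p - c2) / (p - c1)) + ang ((p - c1) / (p - c4)) = pi"
    using a by (intro ang_sum_pi2[OF _ _ prod nreal]) auto
  thus "theta_vert z m n + theta_horiz z m n = pi" using F(7,8) by simp
qed

lemma vertex_bwd:
  assumes cp: "circle_pattern z"
    and h: "theta_vert z m n = \<alpha>" "theta_horiz z m n = pi - \<alpha>"
      "theta_vert z m (n-1) = \<alpha>" "theta_horiz z (m-1) n = pi - \<alpha>"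
  shows "T1 z m n \<and> T2 z m n"
proof -
  define p where "p = z (m,n)"
  define c1 where "c1 = face_center z (m,n)"
  define c2 where "c2 = face_center z (m-1,n)"
  define c3 where "c3 = face_center z (m-1,n-1)"
  define c4 where "c4 = face_center z (m,n-1)"
  note F = vfacts[OF cp, of m n, folded p_def c1_def c2_def c3_def c4_def]
  have a: "p - c1 \<noteq> 0" "p - c2 \<noteq> 0" "p - c3 \<noteq> 0" "p - c4 \<noteq> 0" using F(1-4) by auto
  have A: "ang ((p - c2) / (p - c1)) = \<alpha>" "ang ((p - c1) / (p - c4)) = pi - \<alpha>"
    "ang ((p - c4) / (p - c3)) = \<alpha>" "ang ((p - c3) / (p - c2)) = pi - \<alpha>"
    using h F(7-10) by auto
  have al: "\<alpha> \<noteq> 0" using A(2) ang_range[of "(p - c1) / (p - c4)"] by auto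
  obtain j where j: "(p - c1) / (p - c4) * ((p - c2) / (p - c1)) = of_real j"
    using ang_sum_pi[of "(p - c1) / (p - c4)" "(p - c2) / (p - c1)"] a A by auto
  have "(p - c1) / (p - c4) * ((p - c2) / (p - c1)) = (p - c2) / (p - c4)" using a(1) by simp
  hence "(p - c2) / (p - c4) = of_real j" using j by simp
  hence j': "p - c2 = of_real j * (p - c4)" using a(4) by (simp add: divide_eq_eq)
  have j0: "j \<noteq> 0" using j' a by auto
  obtain k where k: "k \<noteq> 0" "(p - c2) / (p - c1) = of_real k * ((p - c4) / (p - c3))"
    using ang_eq_par[of "(p - c2) / (p - c1)" "(p - c4) / (p - c3)"] a A by auto
  have "of_real j * (p - c4) / (p - c1) = of_real k * ((p - c4) / (p - c3))" using k(2) j' by simp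
  have "p - c1 = of_real (j / k) * (p - c3)" by (rule alg2[OF a k(1) j' k(2)])
  moreover have "c1 \<noteq> c3"
  proof
    assume "c1 = c3" hence "c1 = c2" using F(13) by blast
    hence "ang ((p - c2) / (p - c1)) = 0" using a by (simp add: ang_one)
    thus False using A(1) al by simp
  qed
  moreover have "c2 \<noteq> c4"
  proof
    assume "c2 = c4" hence "c1 = c2" using F(14) by blast
    hence "ang ((p - c2) / (p - c1)) = 0" using a by (simp add: ang_one)
    thus False using A(1) al by simp
  qed
  ultimately show ?thesis using F(5,6) j' by blast
qed

theorem mainTheorem17:
  fixes z :: "int \<times> int \<Rightarrow> complex"
  assumes "circle_pattern z"
  shows "(Mb z = Some \<circ> z \<and> Mw z = Some \<circ> z) \<longleftrightarrow> constant_angles z"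
proof -
  note cp = assms
  have "(\<forall>m n. T1 z m n \<and> T2 z m n) \<longleftrightarrow> constant_angles z"
  proof
    assume T: "\<forall>m n. T1 z m n \<and> T2 z m n"
    note V = vertex_fwd[OF cp T[rule_format, THEN conjunct1] T[rule_format, THEN conjunct2]]
    have cv: "theta_vert z m n = theta_vert z m 0" for m n
      using int_const[of "theta_vert z m"] V(1) by metis
    have ch: "theta_horiz z m n = theta_horiz z 0 n" for m n
      using int_const[of "\<lambda>m. theta_horiz z m n"] V(2) by metis
    have "theta_vert z m n = theta_vert z 0 0" for m n
    proof -
      have "theta_vert z m n = pi - theta_horiz z m n" using V(3)[of m n] by simp
      also have "\<dots> = pi - theta_horiz z 0 n" using ch by simp
      also have "\<dots> = theta_vert z 0 n" using V(3)[of 0 n] by simp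
      also have "\<dots> = theta_vert z 0 0" using cv by simp
      finally show ?thesis .
    qed
    moreover have "theta_horiz z m n = pi - theta_vert z 0 0" for m n
      using V(3)[of m n] calculation[of m n] by simp
    ultimately show "constant_angles z" unfolding constant_angles_def by blast
  next
    assume "constant_angles z"
    then obtain \<alpha> where "\<forall>m n. theta_vert z m n = \<alpha>" "\<forall>m n. theta_horiz z m n = pi - \<alpha>"
      unfolding constant_angles_def by blast
    thus "\<forall>m n. T1 z m n \<and> T2 z m n" using vertex_bwd[OF cp] by blast
  qed
  thus ?thesis using fixed_iff by blast
qed


end
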